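(* Let $G$ be a finite $2$-group having a normal subgroup $N$ with $N\cong C_2\times C_2$. Then $G$ is not a $2$-closed group.
   Context: Permutations act on the right. For $X\leq{\rm Sym}(\Omega)$, the $2$-closure of $X$ on $\Omega$ is $X^{(2),\Omega}=\{\theta\in{\rm Sym}(\Omega)\mid \forall \alpha,\beta\in\Omega\ \exists g\in X:\ \alpha^\theta=\alpha^g,\ \beta^\theta=\beta^g\}$. An abstract group $G$ is called a $2$-closed group if $H=H^{(2),\Omega}$ for every set $\Omega$ and every subgroup $H\leq{\rm Sym}(\Omega)$ with $H\cong G$. $C_2$ is the cyclic group of order $2$. *)

theory Defs
  imports "HOL-Algebra.Algebra"
begin

text \<open>Sym(Omega) is BijGroup Omega (bijections of Omega, extensional outside Omega).
  The 2-closure of a set S of permutations of Omega.\<close>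
definition two_closure :: "'b set \<Rightarrow> ('b \<Rightarrow> 'b) set \<Rightarrow> ('b \<Rightarrow> 'b) set" where
  "two_closure Om S =
     {th \<in> Bij Om. \<forall>a\<in>Om. \<forall>b\<in>Om. \<exists>g\<in>S. th a = g a \<and> th b = g b}"

text \<open>G is 2-closed with respect to all permutation domains Omega drawn from the type 'b:
  every subgroup of Sym(Omega) isomorphic to G equals its 2-closure.\<close>
definition two_closed_group :: "('a, 'c) monoid_scheme \<Rightarrow> 'b itself \<Rightarrow> bool" where
  "two_closed_group G (_ :: 'b itself) \<longleftrightarrow>
     (\<forall>(Om :: 'b set) H. subgroup H (BijGroup Om) \<and> ((BijGroup Om)\<lparr>carrier := H\<rparr>) \<cong> G
        \<longrightarrow> two_closure Om H = H)"

abbreviation C2 :: "int monoid" where "C2 \<equiv> integer_mod_group 2"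

end

theory Submission
  imports Defs
begin

lemma transfer_not_closed:
  fixes G (structure) and Om :: "'c set" and phi :: "'a \<Rightarrow> 'c \<Rightarrow> 'c" and th
  assumes grp: "group G" and hom: "phi \<in> hom G (BijGroup Om)" and inj: "inj_on phi (carrier G)"
    and fin: "finite Om" and cl: "th \<in> two_closure Om (phi ` carrier G)"
    and nin: "th \<notin> phi ` carrier G"
  shows "\<not> two_closed_group G TYPE(nat)"
proof
  assume tc: "two_closed_group G TYPE(nat)"
  obtain e where e: "bij_betw e Om {0..<card Om}" using ex_bij_betw_finite_nat[OF fin] by blast
  define O' where "O' = {0..<card Om}"
  define ei where "ei = inv_into Om e"
  define T where "T f = restrict (\<lambda>y. e (f (ei y))) O'" for f :: "'c \<Rightarrow> 'c"
  have ebij: "bij_betw e Om O'" using e by (simp add: O'_def)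
  have einj: "inj_on e Om" and eimg: "e ` Om = O'" using ebij by (auto simp: bij_betw_def)
  have eibij: "bij_betw ei O' Om" using ebij by (simp add: ei_def bij_betw_inv_into)
  have ei1: "\<And>x. x \<in> Om \<Longrightarrow> ei (e x) = x" by (simp add: ei_def einj)
  have T_app: "\<And>f x. x \<in> Om \<Longrightarrow> T f (e x) = e (f x)" using eimg ei1 by (auto simp: T_def)
  have T_bij: "T f \<in> Bij O'" if f: "f \<in> Bij Om" for f
  proof -
    have fb: "bij_betw f Om Om" using f by (simp add: Bij_def)
    have "bij_betw (e \<circ> (f \<circ> ei)) O' O'"
      by (rule bij_betw_trans[OF bij_betw_trans[OF eibij fb] ebij])
    then have "bij_betw (T f) O' O'"
      by (rule bij_betw_cong[THEN iffD1, rotated]) (simp add: T_def)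
    then show ?thesis by (simp add: Bij_def T_def)
  qed
  have T_inj: "f = g" if f: "f \<in> Bij Om" and g: "g \<in> Bij Om" and eq: "T f = T g" for f g
  proof (rule extensionalityI[of f Om])
    show "f \<in> extensional Om" "g \<in> extensional Om" using f g by (auto simp: Bij_def)
    fix x assume x: "x \<in> Om"
    have "e (f x) = e (g x)" using eq T_app[OF x] by metis
    moreover have "f x \<in> Om" "g x \<in> Om" using f g x Bij_imp_funcset by blast+
    ultimately show "f x = g x" using einj by (auto dest: inj_onD)
  qed
  have T_mult: "T (f \<otimes>\<^bsub>BijGroup Om\<^esub> g) = T f \<otimes>\<^bsub>BijGroup O'\<^esub> T g"
    if f: "f \<in> Bij Om" and g: "g \<in> Bij Om" for f g
  proof -
    have "T (compose Om f g) = compose O' (T f) (T g)"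
    proof (rule extensionalityI[of _ O'])
      show "T (compose Om f g) \<in> extensional O'" by (simp add: T_def)
      show "compose O' (T f) (T g) \<in> extensional O'" by (simp add: compose_def)
      fix y assume y: "y \<in> O'"
      then obtain x where x: "x \<in> Om" "y = e x" using eimg by blast
      have gx: "g x \<in> Om" using g x Bij_imp_funcset by blast
      show "T (compose Om f g) y = compose O' (T f) (T g) y"
        using x y gx T_app eimg by (auto simp: compose_def)
    qed
    then show ?thesis using f g T_bij by (simp add: BijGroup_def)
  qed
  define psi where "psi = (\<lambda>g. T (phi g))"
  have phiB: "\<And>g. g \<in> carrier G \<Longrightarrow> phi g \<in> Bij Om"
    using hom by (auto simp: hom_def BijGroup_def)
  have psi_hom: "psi \<in> hom G (BijGroup O')"
    unfolding hom_def
  proof (intro CollectI conjI ballI)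
    show "psi \<in> carrier G \<rightarrow> carrier (BijGroup O')"
      using phiB T_bij by (auto simp: psi_def BijGroup_def)
    fix x y assume x: "x \<in> carrier G" and y: "y \<in> carrier G"
    have "phi (x \<otimes> y) = phi x \<otimes>\<^bsub>BijGroup Om\<^esub> phi y" using hom x y by (simp add: hom_mult)
    then show "psi (x \<otimes> y) = psi x \<otimes>\<^bsub>BijGroup O'\<^esub> psi y"
      using T_mult phiB x y by (simp add: psi_def)
  qed
  define H where "H = psi ` carrier G"
  have gh: "group_hom G (BijGroup O') psi"
    using grp psi_hom group_BijGroup by (simp add: group_hom_def group_hom_axioms_def)
  have sub: "subgroup H (BijGroup O')" using group_hom.img_is_subgroup[OF gh] by (simp add: H_def)
  have psi_inj: "inj_on psi (carrier G)"
  proof (rule inj_onI)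
    fix x y assume "x \<in> carrier G" "y \<in> carrier G" "psi x = psi y"
    then have "phi x = phi y" using T_inj phiB by (simp add: psi_def)
    then show "x = y" using inj \<open>x \<in> carrier G\<close> \<open>y \<in> carrier G\<close> by (auto dest: inj_onD)
  qed
  have "psi \<in> iso G ((BijGroup O')\<lparr>carrier := H\<rparr>)"
    using psi_hom psi_inj by (auto simp: iso_def hom_def H_def bij_betw_def)
  then have "G \<cong> (BijGroup O')\<lparr>carrier := H\<rparr>" by (rule is_isoI)
  then have iso: "(BijGroup O')\<lparr>carrier := H\<rparr> \<cong> G" using group.iso_sym[OF grp] by blast
  have eqH: "two_closure O' H = H" using tc sub iso by (simp add: two_closed_group_def)
  have thB: "th \<in> Bij Om" using cl by (simp add: two_closure_def)
  have "T th \<in> two_closure O' H"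
    unfolding two_closure_def
  proof (intro CollectI conjI ballI)
    show "T th \<in> Bij O'" using T_bij thB .
    fix a b assume a: "a \<in> O'" and b: "b \<in> O'"
    then obtain a0 b0 where a0: "a0 \<in> Om" "a = e a0" and b0: "b0 \<in> Om" "b = e b0" using eimg by blast
    have "\<exists>g\<in>carrier G. th a0 = phi g a0 \<and> th b0 = phi g b0"
      using cl a0 b0 by (auto simp: two_closure_def)
    then obtain g where g: "g \<in> carrier G" "th a0 = phi g a0" "th b0 = phi g b0" by blast
    show "\<exists>ga\<in>H. T th a = ga a \<and> T th b = ga b"
      by (rule bexI[of _ "psi g"]) (use a0 b0 g T_app in \<open>auto simp: psi_def H_def\<close>)
  qed
  moreover have "T th \<notin> H"
  proof
    assume "T th \<in> H"
    then obtain g where g: "g \<in> carrier G" "T th = T (phi g)" by (auto simp: H_def psi_def)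
    then have "th = phi g" using T_inj thB phiB by blast
    then show False using nin g by blast
  qed
  ultimately show False using eqH by simp
qed


lemma construction:
  fixes G (structure)
  assumes grp: "group G" and fin: "finite (carrier G)"
   and zc: "z \<in> carrier G" and pc: "p \<in> carrier G"
   and cen: "\<And>g. g \<in> carrier G \<Longrightarrow> g \<otimes> z = z \<otimes> g"
   and pp: "p \<otimes> p = \<one>" and zz: "z \<otimes> z = \<one>" and p1: "p \<noteq> \<one>" and z1: "z \<noteq> \<one>" and pz: "p \<noteq> z"
   and conj: "\<And>x v. x \<in> carrier G \<Longrightarrow> v \<in> {p, p \<otimes> z} \<Longrightarrow> x \<otimes> v \<otimes> inv x \<in> {\<one>, z, p, p \<otimes> z}"
  shows "\<not> two_closed_group G TYPE(nat)"
proof -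
  interpret group G by (rule grp)
  define q where "q = p \<otimes> z"
  have qc: "q \<in> carrier G" using pc zc by (simp add: q_def)
  have qq: "q \<otimes> q = \<one>"
  proof -
    have "q \<otimes> q = p \<otimes> (z \<otimes> p) \<otimes> z" using pc zc by (simp add: q_def m_assoc)
    also have "\<dots> = p \<otimes> (p \<otimes> z) \<otimes> z" using cen[OF pc] by simp
    also have "\<dots> = p \<otimes> p \<otimes> (z \<otimes> z)" using pc zc by (simp add: m_assoc)
    finally show ?thesis using pp zz by simp
  qed
  have q1: "q \<noteq> \<one>"
  proof
    assume "q = \<one>"
    then have "p \<otimes> z \<otimes> z = z" using zc pc by (simp add: q_def)
    then have "p = z" using zz pc zc by (simp add: m_assoc)
    then show False using pz by simp
  qed
  have qp: "q \<noteq> p"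
  proof
    assume "q = p" then have "p \<otimes> z = p \<otimes> \<one>" using pc by (simp add: q_def)
    then show False using z1 pc zc l_cancel by blast
  qed
  have qz: "q \<noteq> z"
  proof
    assume "q = z" then have "p \<otimes> z = \<one> \<otimes> z" using zc by (simp add: q_def)
    then show False using p1 pc zc r_cancel by blast
  qed
  define u where "u i = (if i = (0::nat) then p else if i = 1 then q else z)" for i
  have uc: "u i \<in> carrier G" for i using pc qc zc by (simp add: u_def)
  have uu: "u i \<otimes> u i = \<one>" for i using pp qq zz by (simp add: u_def)
  define Om where "Om = (\<lambda>(i,x). (i, {x, x \<otimes> u i})) ` ({..<3::nat} \<times> carrier G)"
  have Om_mem: "(i, {x, x \<otimes> u i}) \<in> Om" if "i < 3" "x \<in> carrier G" for i x
    using that by (auto simp: Om_def)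
  have Om_cases: "\<exists>i x. i < 3 \<and> x \<in> carrier G \<and> a = (i, {x, x \<otimes> u i})" if "a \<in> Om" for a
    using that by (auto simp: Om_def)
  have finOm: "finite Om" using fin by (simp add: Om_def)
  define phi where "phi g = restrict (\<lambda>(i,C). (i, (\<lambda>c. g \<otimes> c) ` C)) Om" for g
  have phi_app: "phi g (i, {x, x \<otimes> u i}) = (i, {g \<otimes> x, g \<otimes> x \<otimes> u i})"
    if "g \<in> carrier G" "i < 3" "x \<in> carrier G" for g i x
    using that Om_mem[OF that(2,3)] uc by (simp add: phi_def m_assoc)
  have phi_Om: "phi g a \<in> Om" if "g \<in> carrier G" "a \<in> Om" for g a
    using that Om_cases[OF that(2)] phi_app Om_mem by (auto simp del: insert_image)
  have phi_inv: "phi (inv g) (phi g a) = a" if gA: "g \<in> carrier G" and aA: "a \<in> Om" for g a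
  proof -
    obtain i x where ix: "i < 3" "x \<in> carrier G" "a = (i, {x, x \<otimes> u i})" using Om_cases[OF aA] by blast
    have "phi (inv g) (phi g a) = (i, {inv g \<otimes> (g \<otimes> x), inv g \<otimes> (g \<otimes> x) \<otimes> u i})"
      using ix gA phi_app by simp
    also have "\<dots> = a" using ix gA by (simp add: m_assoc[symmetric])
    finally show ?thesis .
  qed
  have phi_inv2: "phi g (phi (inv g) a) = a" if "g \<in> carrier G" "a \<in> Om" for g a
    using phi_inv[of "inv g" a] that by simp
  have phiB: "phi g \<in> Bij Om" if g: "g \<in> carrier G" for g
  proof -
    have "bij_betw (phi g) Om Om"
      by (rule bij_betw_byWitness[of _ "phi (inv g)"]) (use g phi_inv phi_inv2 phi_Om in auto)
    then show ?thesis by (simp add: Bij_def phi_def)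
  qed
  have phi_hom: "phi \<in> hom G (BijGroup Om)"
    unfolding hom_def
  proof (intro CollectI conjI ballI)
    show "phi \<in> carrier G \<rightarrow> carrier (BijGroup Om)" using phiB by (auto simp: BijGroup_def)
    fix g h assume g: "g \<in> carrier G" and h: "h \<in> carrier G"
    have "phi (g \<otimes> h) = compose Om (phi g) (phi h)"
    proof (rule extensionalityI[of _ Om])
      show "phi (g \<otimes> h) \<in> extensional Om" by (simp add: phi_def)
      show "compose Om (phi g) (phi h) \<in> extensional Om" by (simp add: compose_def)
      fix a assume a: "a \<in> Om"
      obtain i x where ix: "i < 3" "x \<in> carrier G" "a = (i, {x, x \<otimes> u i})" using Om_cases[OF a] by blast
      show "phi (g \<otimes> h) a = compose Om (phi g) (phi h) a"
        using ix g h a phi_app by (simp add: compose_def m_assoc)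
    qed
    then show "phi (g \<otimes> h) = phi g \<otimes>\<^bsub>BijGroup Om\<^esub> phi h"
      using phiB g h by (simp add: BijGroup_def)
  qed
  have one_p: "(0::nat, {\<one>, \<one> \<otimes> u 0}) \<in> Om" and one_q: "(1::nat, {\<one>, \<one> \<otimes> u 1}) \<in> Om"
    and one_z: "(2::nat, {\<one>, \<one> \<otimes> u 2}) \<in> Om" using Om_mem by auto
  have pt: "phi g (i, {\<one>, u i}) = (i, {g, g \<otimes> u i})" if "g \<in> carrier G" "i < 3" for g i
    using phi_app[OF that one_closed] that uc by simp
  have phi_inj: "inj_on phi (carrier G)"
  proof (rule inj_onI)
    fix g h assume g: "g \<in> carrier G" and h: "h \<in> carrier G" and eq: "phi g = phi h"
    have e0: "{g, g \<otimes> p} = {h, h \<otimes> p}" using pt[of g 0] pt[of h 0] g h eq by (simp add: u_def)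
    have e1: "{g, g \<otimes> q} = {h, h \<otimes> q}" using pt[of g 1] pt[of h 1] g h eq by (simp add: u_def)
    show "g = h"
    proof (rule ccontr)
      assume ne: "g \<noteq> h"
      then have "g = h \<otimes> p" "g = h \<otimes> q" using e0 e1 by (auto simp: doubleton_eq_iff)
      then have "p = q" using h pc qc l_cancel by metis
      then show False using qp by simp
    qed
  qed
  define th where "th = restrict (\<lambda>(i,C). if i = 2 then (i, (\<lambda>c. p \<otimes> c) ` C) else (i, C)) Om"
  have th_app: "th (i, {x, x \<otimes> u i}) = (if i = 2 then phi p (i, {x, x \<otimes> u i}) else (i, {x, x \<otimes> u i}))"
    if "i < 3" "x \<in> carrier G" for i x
  proof (cases "i = 2")
    case True
    then show ?thesis using that pc Om_mem[OF that] phi_app[OF pc that] uc by (simp add: th_def m_assoc)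
  qed (use that Om_mem[OF that] in \<open>simp add: th_def\<close>)
  have th_Om: "th a \<in> Om" if "a \<in> Om" for a
    using that Om_cases[OF that] th_app phi_Om pc by fastforce
  have th_th: "th (th a) = a" if aA: "a \<in> Om" for a
  proof -
    obtain i x where ix: "i < 3" "x \<in> carrier G" "a = (i, {x, x \<otimes> u i})" using Om_cases[OF aA] by blast
    show ?thesis
    proof (cases "i = 2")
      case True
      have "th (th a) = phi p (phi p a)" using ix True th_app phi_app pc by simp
      also have "\<dots> = a" using phi_inv[OF pc aA] pp pc inv_char by (metis inv_unique' )
      finally show ?thesis .
    qed (use ix th_app in simp)
  qed
  have thB: "th \<in> Bij Om"
  proof -
    have "bij_betw th Om Om"
      by (rule bij_betw_byWitness[of _ th]) (use th_th th_Om in auto)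
    then show ?thesis by (simp add: Bij_def th_def)
  qed
  have mixed: "\<exists>g\<in>carrier G. {g \<otimes> x, g \<otimes> x \<otimes> u i} = {x, x \<otimes> u i} \<and> {g \<otimes> y, g \<otimes> y \<otimes> z} = {p \<otimes> y, p \<otimes> y \<otimes> z}"
    if i: "i < 2" and x: "x \<in> carrier G" and y: "y \<in> carrier G" for i x y
  proof -
    define g where "g = x \<otimes> u i \<otimes> inv x"
    have gc: "g \<in> carrier G" using x uc by (simp add: g_def)
    have uin: "u i \<in> {p, p \<otimes> z}" using i by (auto simp: u_def q_def)
    have "g \<in> {\<one>, z, p, q}" using conj[OF x uin] by (simp add: g_def q_def)
    moreover have "g \<noteq> \<one>"
    proof
      assume "g = \<one>"
      then have "x \<otimes> u i = \<one> \<otimes> x" using x uc by (simp add: g_def inv_solve_right')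
      then have "x \<otimes> u i = x \<otimes> \<one>" using x by simp
      then have "u i = \<one>" using x uc l_cancel by blast
      then show False using i p1 q1 by (auto simp: u_def split: if_splits)
    qed
    moreover have "g \<noteq> z"
    proof
      assume "g = z"
      then have "x \<otimes> u i = z \<otimes> x" using x uc zc by (simp add: g_def inv_solve_right')
      then have "x \<otimes> u i = x \<otimes> z" using cen[OF x] by simp
      then have "u i = z" using x uc zc l_cancel by blast
      then show False using i pz qz by (auto simp: u_def split: if_splits)
    qed
    ultimately have gpq: "g = p \<or> g = p \<otimes> z" by (auto simp: q_def)
    have gx: "g \<otimes> x = x \<otimes> u i" using x uc by (simp add: g_def m_assoc)
    have "g \<otimes> x \<otimes> u i = x" using gx x uc uu by (simp add: m_assoc)
    then have c1: "{g \<otimes> x, g \<otimes> x \<otimes> u i} = {x, x \<otimes> u i}" using gx by auto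
    have c2: "{g \<otimes> y, g \<otimes> y \<otimes> z} = {p \<otimes> y, p \<otimes> y \<otimes> z}"
      using gpq
    proof
      assume "g = p \<otimes> z"
      then have a: "g \<otimes> y = p \<otimes> y \<otimes> z" using pc zc y cen[OF y] by (simp add: m_assoc)
      then have "g \<otimes> y \<otimes> z = p \<otimes> y" using pc zc y zz by (simp add: m_assoc)
      then show ?thesis using a by auto
    qed simp
    show ?thesis using gc c1 c2 by blast
  qed
  have wit: "\<exists>g\<in>carrier G. th a = phi g a \<and> th b = phi g b" if a: "a \<in> Om" and b: "b \<in> Om"
    and ord: "fst a \<le> fst b" for a b
  proof -
    obtain i x where ix: "i < 3" "x \<in> carrier G" "a = (i, {x, x \<otimes> u i})" using Om_cases[OF a] by blast
    obtain j y where jy: "j < 3" "y \<in> carrier G" "b = (j, {y, y \<otimes> u j})" using Om_cases[OF b] by blast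
    have ij: "i \<le> j" using ord ix jy by simp
    show ?thesis
    proof (cases "j = 2")
      case False
      then have "i \<noteq> 2" using ij jy by simp
      then show ?thesis using False ix jy th_app phi_app
        by (intro bexI[of _ \<one>]) (auto simp: m_assoc)
    next
      case jT: True
      show ?thesis
      proof (cases "i = 2")
        case True
        then show ?thesis using jT ix jy th_app pc by (intro bexI[of _ p]) auto
      next
        case False
        then have i2: "i < 2" using ix by simp
        obtain g where g: "g \<in> carrier G" "{g \<otimes> x, g \<otimes> x \<otimes> u i} = {x, x \<otimes> u i}"
          "{g \<otimes> y, g \<otimes> y \<otimes> z} = {p \<otimes> y, p \<otimes> y \<otimes> z}" using mixed[OF i2 ix(2) jy(2)] by blast
        have uj: "u j = z" using jT by (simp add: u_def)
        show ?thesis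
          by (rule bexI[OF _ g(1)]) (use g ix jy jT False uj th_app phi_app pc in auto)
      qed
    qed
  qed
  have cl: "th \<in> two_closure Om (phi ` carrier G)"
    unfolding two_closure_def
  proof (intro CollectI conjI ballI)
    show "th \<in> Bij Om" by (rule thB)
    fix a b assume a: "a \<in> Om" and b: "b \<in> Om"
    have "\<exists>g\<in>carrier G. th a = phi g a \<and> th b = phi g b"
    proof (cases "fst a \<le> fst b")
      case True then show ?thesis using wit a b by blast
    next
      case False then show ?thesis using wit[OF b a] by auto
    qed
    then show "\<exists>g\<in>phi ` carrier G. th a = g a \<and> th b = g b" by blast
  qed
  have nin: "th \<notin> phi ` carrier G"
  proof
    assume "th \<in> phi ` carrier G"
    then obtain g where g: "g \<in> carrier G" "th = phi g" by blast
    have t0: "th (0, {\<one>, u 0}) = (0, {\<one>, u 0})" using th_app[of 0 \<one>] uc by simp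
    have t1: "th (1, {\<one>, u 1}) = (1, {\<one>, u 1})" using th_app[of 1 \<one>] uc by simp
    have t2: "th (2, {\<one>, u 2}) = (2, {p, p \<otimes> z})" using th_app[of 2 \<one>] uc pc zc phi_app[OF pc, of 2 \<one>]
      by (simp add: u_def)
    have "{g, g \<otimes> p} = {\<one>, p}" using t0 pt[of g 0] g by (simp add: u_def)
    then have g0: "g = \<one> \<or> g = p" by (auto simp: doubleton_eq_iff)
    have "{g, g \<otimes> q} = {\<one>, q}" using t1 pt[of g 1] g by (simp add: u_def)
    then have g1: "g = \<one> \<or> g = q" by (auto simp: doubleton_eq_iff)
    have g1': "g = \<one>" using g0 g1 qp by auto
    have "{p, p \<otimes> z} = {\<one>, z}" using t2 pt[of g 2] g g1' zc by (simp add: u_def)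
    then show False using p1 pz by (auto simp: doubleton_eq_iff)
  qed
  show ?thesis by (rule transfer_not_closed[OF grp phi_hom phi_inj finOm cl nin])
qed


lemma three_ndvd_pow2: "\<not> (3::nat) dvd 2 ^ n"
proof (induction n)
  case (Suc n)
  then show ?case by (metis add.commute dvdI dvd_add_right_iff eval_nat_numeral(3) mult_Suc
    plus_1_eq_Suc power_add power_one_right)
qed simp

theorem mainTheorem10:
  fixes G (structure) and N :: "'a set"
  assumes "group G"
    and "finite (carrier G)"
    and "\<exists>n::nat. card (carrier G) = 2 ^ n"
    and "N \<lhd> G"
    and "(G\<lparr>carrier := N\<rparr>) \<cong> (C2 \<times>\<times> C2)"
  shows "\<not> two_closed_group G TYPE(nat)"
proof -
  interpret group G by (rule assms(1))
  obtain n :: nat where ordG: "card (carrier G) = 2 ^ n" using assms(3) by blast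
  have nsub: "subgroup N G" using assms(4) normal_inv_iff by blast
  have nconj: "\<And>x y. x \<in> carrier G \<Longrightarrow> y \<in> N \<Longrightarrow> x \<otimes> y \<otimes> inv x \<in> N"
    using assms(4) normal_inv_iff by blast
  have Nc: "N \<subseteq> carrier G" using nsub subgroup.subset by blast
  have finN: "finite N" using assms(2) Nc finite_subset by blast
  have oneN: "\<one> \<in> N" using nsub subgroup.one_closed by blast
  obtain h where h: "h \<in> iso (G\<lparr>carrier := N\<rparr>) (C2 \<times>\<times> C2)" using assms(5) by (auto simp: is_iso_def)
  have cardN: "card N = 4"
    using iso_same_card[OF assms(5)] by (simp add: carrier_integer_mod_group)
  have sq: "x \<otimes> x = \<one>" if xN: "x \<in> N" for x
  proof -
    have grpN: "group (G\<lparr>carrier := N\<rparr>)" using subgroup_imp_group[OF nsub] .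
    have hh: "h \<in> hom (G\<lparr>carrier := N\<rparr>) (C2 \<times>\<times> C2)" using h by (simp add: iso_def)
    have hinj: "inj_on h N" using h by (simp add: iso_def bij_betw_def)
    have grpC: "group (C2 \<times>\<times> C2)" by (simp add: DirProd_group)
    have h1: "h \<one> = (0, 0)" using hom_one[OF hh grpN grpC] by simp
    obtain a b where ab: "h x = (a, b)" by (cases "h x")
    have hm: "h (x \<otimes> x) = h x \<otimes>\<^bsub>C2 \<times>\<times> C2\<^esub> h x" using hom_mult[OF hh, of x x] xN by simp
    have e1: "(c + c) mod 2 = 0" for c :: int by (simp flip: mult_2)
    have "h (x \<otimes> x) = (0, 0)" using hm ab e1 by simp
    then have "h (x \<otimes> x) = h \<one>" using h1 by simp
    moreover have "x \<otimes> x \<in> N" by (rule subgroup.m_closed[OF nsub xN xN])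
    ultimately show ?thesis by (rule inj_onD[OF hinj _ _ oneN])
  qed
  define phi where "phi = (\<lambda>g. \<lambda>y \<in> carrier G. g \<otimes> y \<otimes> inv g)"
  have ga: "group_action G (carrier G) phi" unfolding phi_def by (rule action_by_conjugation)
  define S where "S = N - {\<one>}"
  have finS: "finite S" using finN by (simp add: S_def)
  have cardS: "card S = 3" using cardN oneN finN by (simp add: S_def)
  have SG: "S \<subseteq> carrier G" using Nc by (auto simp: S_def)
  have orb_sub: "orbit G phi s \<subseteq> S" if sS: "s \<in> S" for s
  proof
    fix t assume "t \<in> orbit G phi s"
    then obtain g where g: "g \<in> carrier G" "t = phi g s" by (auto simp: orbit_def)
    have sc: "s \<in> carrier G" using sS SG by blast
    have tv: "t = g \<otimes> s \<otimes> inv g" using g sc by (simp add: phi_def)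
    have tN: "t \<in> N" using nconj[OF g(1)] sS tv by (simp add: S_def)
    have "t \<noteq> \<one>"
    proof
      assume "t = \<one>"
      then have "g \<otimes> s \<otimes> inv g \<otimes> g = \<one> \<otimes> g" using tv by simp
      then have "g \<otimes> s = g \<otimes> \<one>" using g sc by (simp add: m_assoc)
      then have "s = \<one>" using g sc l_cancel by blast
      then show False using sS by (simp add: S_def)
    qed
    then show "t \<in> S" using tN by (simp add: S_def)
  qed
  have orb_self: "s \<in> orbit G phi s" if "s \<in> S" for s
    using group_action.orbit_refl[OF ga] that SG by blast
  have orb_card: "card (orbit G phi s) = 1 \<or> card (orbit G phi s) = 2" if sS: "s \<in> S" for s
  proof -
    have fo: "finite (orbit G phi s)" using orb_sub[OF sS] finS finite_subset by blast
    have le: "card (orbit G phi s) \<le> 3" using card_mono[OF finS orb_sub[OF sS]] cardS by simp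
    have ge: "card (orbit G phi s) \<ge> 1" using fo orb_self[OF sS]
      by (metis One_nat_def Suc_leI card_gt_0_iff empty_iff)
    have "card (orbit G phi s) * card (stabilizer G phi s) = order G"
      using group_action.orbit_stabilizer_theorem[OF ga] sS SG by blast
    then have "card (orbit G phi s) dvd 2 ^ n" using ordG by (metis dvd_triv_left order_def)
    then have "card (orbit G phi s) \<noteq> 3" using three_ndvd_pow2 by metis
    then show ?thesis using le ge by linarith
  qed
  have exz: "\<exists>z\<in>S. orbit G phi z = {z}"
  proof -
    obtain s1 where s1: "s1 \<in> S" using cardS by (metis card.empty ex_in_conv zero_neq_numeral)
    show ?thesis
    proof (cases "card (orbit G phi s1) = 1")
      case True
      then obtain w where "orbit G phi s1 = {w}" by (auto simp: card_Suc_eq)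
      then show ?thesis using s1 orb_self[OF s1] by auto
    next
      case False
      then have c2: "card (orbit G phi s1) = 2" using orb_card[OF s1] by blast
      have fo: "finite (orbit G phi s1)" using orb_sub[OF s1] finS finite_subset by blast
      have "card (S - orbit G phi s1) = 1"
        using card_Diff_subset[OF fo orb_sub[OF s1]] cardS c2 by simp
      then obtain s3 where s3: "S - orbit G phi s1 = {s3}" by (auto simp: card_Suc_eq)
      have s3S: "s3 \<in> S" and s3n: "s3 \<notin> orbit G phi s1" using s3 by auto
      have o1: "orbit G phi s1 \<in> orbits G (carrier G) phi" using s1 SG by (auto simp: orbits_def)
      have o3: "orbit G phi s3 \<in> orbits G (carrier G) phi" using s3S SG by (auto simp: orbits_def)
      have "orbit G phi s3 \<noteq> orbit G phi s1" using orb_self[OF s3S] s3n by blast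
      then have "orbit G phi s3 \<inter> orbit G phi s1 = {}"
        using group_action.disjoint_union[OF ga o3 o1] by blast
      then have "orbit G phi s3 \<subseteq> {s3}" using orb_sub[OF s3S] s3 by blast
      then have "orbit G phi s3 = {s3}" using orb_self[OF s3S] by blast
      then show ?thesis using s3S by blast
    qed
  qed
  then obtain z where zS: "z \<in> S" and zo: "orbit G phi z = {z}" by blast
  have zc: "z \<in> carrier G" using zS SG by blast
  have cen: "g \<otimes> z = z \<otimes> g" if gc: "g \<in> carrier G" for g
  proof -
    have "phi g z \<in> orbit G phi z" using gc by (auto simp: orbit_def)
    then have "g \<otimes> z \<otimes> inv g = z" using zo zc by (simp add: phi_def)
    then have "g \<otimes> z \<otimes> inv g \<otimes> g = z \<otimes> g" by simp
    then show ?thesis using gc zc by (simp add: m_assoc)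
  qed
  have "card (S - {z}) = 2" using cardS zS finS by simp
  then obtain p where pS: "p \<in> S" and pz: "p \<noteq> z"
    by (metis Diff_iff card.empty ex_in_conv insertI1 zero_neq_numeral)
  have pc: "p \<in> carrier G" using pS SG by blast
  have pN: "p \<in> N" and zN: "z \<in> N" and p1: "p \<noteq> \<one>" and z1: "z \<noteq> \<one>" using pS zS by (auto simp: S_def)
  have pp: "p \<otimes> p = \<one>" and zz: "z \<otimes> z = \<one>" using sq pN zN by auto
  have pzN: "p \<otimes> z \<in> N" by (rule subgroup.m_closed[OF nsub pN zN])
  have d1: "p \<otimes> z \<noteq> \<one>"
  proof
    assume "p \<otimes> z = \<one>"
    then have "p \<otimes> z \<otimes> z = z" using zc pc by simp
    then have "p = z" using zz pc zc by (simp add: m_assoc)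
    then show False using pz by simp
  qed
  have d2: "p \<otimes> z \<noteq> p"
  proof
    assume "p \<otimes> z = p" then have "p \<otimes> z = p \<otimes> \<one>" using pc by simp
    then show False using z1 pc zc l_cancel by blast
  qed
  have d3: "p \<otimes> z \<noteq> z"
  proof
    assume "p \<otimes> z = z" then have "p \<otimes> z = \<one> \<otimes> z" using zc by simp
    then show False using p1 pc zc r_cancel by blast
  qed
  have Neq: "{\<one>, z, p, p \<otimes> z} = N"
  proof (rule card_subset_eq[OF finN])
    show "{\<one>, z, p, p \<otimes> z} \<subseteq> N" using oneN zN pN pzN by auto
    show "card {\<one>, z, p, p \<otimes> z} = card N" using cardN d1 d2 d3 p1 z1 pz by auto
  qed
  have conj: "x \<otimes> v \<otimes> inv x \<in> {\<one>, z, p, p \<otimes> z}"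
    if "x \<in> carrier G" "v \<in> {p, p \<otimes> z}" for x v
    using nconj[OF that(1)] that(2) pN pzN Neq by auto
  show ?thesis
    by (rule construction[OF assms(1,2) zc pc cen pp zz p1 z1 pz conj]) auto
qed

end
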